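(* Let $\mathcal A\in\mathbb R^{N\times N}$ be Hurwitz and $U\in\mathbb R^{N\times N}$ be such that the unique solution $V$ of the algebraic Lyapunov equation $\mathcal AV+V\mathcal A^T+U=0$ is nonsingular. Then, with $G(s):=(sI_N-\mathcal A)^{-1}$, $$G(i\lambda)\,U\,G(i\lambda)^*=V\,G(i\lambda)^*\,V^{-1}UV^{-1}\,G(i\lambda)\,V\qquad\text{for all }\lambda\in\mathbb R .$$
   Context: $(\cdot)^*$ denotes the conjugate transpose. *)

theory Defs
  imports "HOL-Analysis.Analysis"
begin

definition cmat :: "real^'n^'m \<Rightarrow> complex^'n^'m" where
  "cmat M = (\<chi> i j. complex_of_real (M $ i $ j))"

definition ctrans :: "complex^'n^'m \<Rightarrow> complex^'m^'n" where
  "ctrans M = (\<chi> i j. cnj (M $ j $ i))"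

definition hurwitz :: "real^'n^'n \<Rightarrow> bool" where
  "hurwitz A \<longleftrightarrow> (\<forall>(l::complex) (v::complex^'n). v \<noteq> 0 \<and> cmat A *v v = l *s v \<longrightarrow> Re l < 0)"

definition resolvent :: "real^'n^'n \<Rightarrow> complex \<Rightarrow> complex^'n^'n" where
  "resolvent A s = matrix_inv (mat s - cmat A)"

end

theory Submission
  imports Defs
begin

lemma cmat_mult: "cmat (X ** Y) = cmat X ** cmat Y"
  by (simp add: cmat_def matrix_matrix_mult_def vec_eq_iff)

lemma cmat_add: "cmat (X + Y) = cmat X + cmat Y"
  by (simp add: cmat_def vec_eq_iff)

lemma cmat_uminus: "cmat (- X) = - cmat X"
  by (simp add: cmat_def vec_eq_iff)

lemma cmat_diff: "cmat (X - Y) = cmat X - cmat Y"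
  by (simp add: cmat_def vec_eq_iff)

lemma cmat_mat1: "cmat (mat 1) = mat 1"
  by (simp add: cmat_def mat_def vec_eq_iff)

lemma ctrans_mult: "ctrans (X ** Y) = ctrans Y ** ctrans X"
  by (simp add: ctrans_def matrix_matrix_mult_def vec_eq_iff mult.commute)

lemma ctrans_mat1: "ctrans (mat 1) = mat 1"
  by (simp add: ctrans_def mat_def vec_eq_iff)

lemma mat_sub_mult: "((mat s - X) ** (W::'a::comm_ring_1^'n^'n)) = (\<chi> i j. s * W$i$j) - X ** W"
  by (simp add: matrix_matrix_mult_def mat_def vec_eq_iff left_diff_distrib sum_subtractf
      if_distrib[of "\<lambda>x. x * _"] cong: if_cong)

lemma mult_mat_sub: "((W::'a::comm_ring_1^'n^'n) ** (mat s - X)) = (\<chi> i j. s * W$i$j) - W ** X"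
  by (simp add: matrix_matrix_mult_def mat_def vec_eq_iff right_diff_distrib sum_subtractf
      if_distrib[of "\<lambda>x. _ * x"] mult.commute cong: if_cong)

lemma ctrans_sub: "ctrans (mat s - cmat A) = mat (cnj s) - cmat (transpose A)"
  by (simp add: ctrans_def mat_def cmat_def transpose_def vec_eq_iff)

lemma key:
  fixes A U V :: "real^'n^'n"
  assumes "A ** V + V ** transpose A + U = 0" and "Re s = 0"
  shows "cmat U = (mat s - cmat A) ** cmat V + cmat V ** ctrans (mat s - cmat A)"
proof -
  have U: "U = - (A ** V + V ** transpose A)" using assms(1)
    by (metis neg_eq_iff_add_eq_0)
  have cs: "cnj s = - s" using assms(2) by (simp add: complex_eq_iff)
  have "cmat U = - (cmat A ** cmat V + cmat V ** cmat (transpose A))"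
    unfolding U by (simp add: cmat_add cmat_uminus cmat_mult cmat_diff)
  then show ?thesis
    unfolding ctrans_sub mat_sub_mult mult_mat_sub cs
    by (simp add: vec_eq_iff)
qed

lemma matrix_add_rdistrib: "((B + C) ** (A::'a::semiring_1^'n^'m)) = (B ** A) + (C ** A)"
  by (simp add: matrix_matrix_mult_def vec_eq_iff distrib_right sum.distrib)

lemma inv_props:
  assumes "invertible (M::'a::semiring_1^'n^'n)"
  shows "M ** matrix_inv M = mat 1" "matrix_inv M ** M = mat 1"
  using someI_ex[OF assms[unfolded invertible_def]] unfolding matrix_inv_def by auto

lemma res_invertible:
  fixes A :: "real^'n^'n"
  assumes "hurwitz A" "Re s = 0"
  shows "invertible (mat s - cmat A)"
proof -
  have "\<forall>x. (mat s - cmat A) *v x = 0 \<longrightarrow> x = 0"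
  proof (intro allI impI)
    fix x :: "complex^'n"
    assume h: "(mat s - cmat A) *v x = 0"
    have "cmat A *v x = s *s x"
    proof -
      have "(mat s - cmat A) *v x = s *s x - cmat A *v x"
        by (simp add: matrix_vector_mult_def mat_def vec_eq_iff left_diff_distrib sum_subtractf
          if_distrib[of "\<lambda>y. y * _"] cong: if_cong)
      with h show ?thesis by simp
    qed
    then show "x = 0" using assms unfolding hurwitz_def by force
  qed
  then show ?thesis
    unfolding invertible_left_inverse matrix_left_invertible_ker .
qed

theorem lemma7p2:
  fixes A U V :: "real^'n^'n"
  assumes "hurwitz A"
    and "A ** V + V ** transpose A + U = 0"
    and "invertible V"
  shows "\<forall>lam::real.
    resolvent A (\<i> * complex_of_real lam) ** cmat U ** ctrans (resolvent A (\<i> * complex_of_real lam))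
    = cmat V ** ctrans (resolvent A (\<i> * complex_of_real lam)) ** cmat (matrix_inv V) ** cmat U
        ** cmat (matrix_inv V) ** resolvent A (\<i> * complex_of_real lam) ** cmat V"
proof
  fix lam :: real
  define s where "s = \<i> * complex_of_real lam"
  have rs: "Re s = 0" by (simp add: s_def)
  define M where "M = mat s - cmat A"
  define G where "G = matrix_inv M"
  define N where "N = ctrans M"
  define H where "H = ctrans G"
  define W where "W = cmat V"
  define Wi where "Wi = cmat (matrix_inv V)"
  have MG: "M ** G = mat 1" and GM: "G ** M = mat 1"
    using inv_props[OF res_invertible[OF assms(1) rs]] by (simp_all add: G_def M_def)
  have NH: "N ** H = mat 1" unfolding N_def H_def
    by (metis GM ctrans_mult ctrans_mat1)
  have HN: "H ** N = mat 1" unfolding N_def H_def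
    by (metis MG ctrans_mult ctrans_mat1)
  have WWi: "W ** Wi = mat 1" and WiW: "Wi ** W = mat 1"
    using inv_props[OF assms(3)] by (simp_all add: W_def Wi_def flip: cmat_mult add: cmat_mat1)
  have cU: "cmat U = M ** W + W ** N"
    unfolding M_def W_def N_def by (rule key[OF assms(2) rs])
  have L: "G ** cmat U ** H = W ** H + G ** W"
    unfolding cU matrix_add_ldistrib matrix_add_rdistrib
    by (simp add: matrix_mul_assoc GM flip: matrix_mul_assoc[of _ N H] add: NH)
  have I: "Wi ** cmat U ** Wi = Wi ** M + N ** Wi"
    unfolding cU matrix_add_ldistrib matrix_add_rdistrib
    by (simp add: matrix_mul_assoc WiW flip: matrix_mul_assoc[of _ W Wi] add: WWi)
  have R: "W ** H ** Wi ** cmat U ** Wi ** G ** W = W ** H + G ** W"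
  proof -
    have "W ** H ** Wi ** cmat U ** Wi ** G ** W = W ** H ** (Wi ** cmat U ** Wi) ** G ** W"
      by (simp add: matrix_mul_assoc)
    also have "\<dots> = W ** H ** (Wi ** M + N ** Wi) ** G ** W" by (simp add: I)
    also have "\<dots> = W ** H ** Wi ** (M ** G) ** W + W ** (H ** N) ** Wi ** G ** W"
      by (simp add: matrix_add_ldistrib matrix_add_rdistrib matrix_mul_assoc)
    also have "\<dots> = W ** H + G ** W"
      by (simp add: MG HN flip: matrix_mul_assoc add: matrix_mul_assoc[symmetric] WiW WWi)
    finally show ?thesis .
  qed
  show "resolvent A (\<i> * complex_of_real lam) ** cmat U ** ctrans (resolvent A (\<i> * complex_of_real lam))
    = cmat V ** ctrans (resolvent A (\<i> * complex_of_real lam)) ** cmat (matrix_inv V) ** cmat U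
        ** cmat (matrix_inv V) ** resolvent A (\<i> * complex_of_real lam) ** cmat V"
    using L R by (simp add: resolvent_def s_def M_def G_def H_def W_def Wi_def)
qed

end
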